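(* There exist an environment $E$ and a total preorder $\succeq$ on $\Pi^E$ such that $\succeq\in\mathrm{Ord}_{\mathrm{RRL}}(E)$ but $\succeq\notin\mathrm{Ord}_{\mathrm{ONMR}}(E)$.
   Context: An environment is a tuple $E=(\mathcal S,\mathcal A,\mathcal T,\mathcal I)$ where $\mathcal S,\mathcal A$ are finite nonempty sets, $\mathcal T:\mathcal S\times\mathcal A\to\Delta(\mathcal S)$ and $\mathcal I\in\Delta(\mathcal S)$. A policy is a map $\pi:\mathcal S\to\Delta(\mathcal A)$ (stationary, possibly stochastic); $\Pi^E$ denotes the set of all policies. A trajectory $\xi=(s_0,a_0,s_1,a_1,\dots)$ is generated under $\pi$ by $s_0\sim\mathcal I$, $a_t\sim\pi(s_t)$, $s_{t+1}\sim\mathcal T(s_t,a_t)$; $\mathbb E^\pi_\xi$ denotes expectation under this distribution. An objective-specification formalism $X$ assigns to each environment $E$ a set of objective specifications, each inducing a total preorder $\succeq$ on $\Pi^E$; $\mathrm{Ord}_X(E)$ is the set of total preorders so induced. A specification defining a scalar $J:\Pi^E\to\mathbb R$ induces $\pi_1\succeq\pi_2\iff J(\pi_1)\ge J(\pi_2)$. RRL: specification $(\mathcal R,\alpha,F,\gamma)$ with $\mathcal R:\mathcal S\times\mathcal A\times\mathcal S\to\mathbb R$, $\alpha\in\mathbb R$, $F:\Delta(\mathcal A)\to\mathbb R$, $\gamma\in[0,1)$; $J(\pi)=\mathbb E^\pi_\xi[\sum_{t=0}^\infty\gamma^t(\mathcal R(s_t,a_t,s_{t+1})-\alpha F(\pi(s_t)))]$.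 ONMR: specification $(\mathcal R,f,\gamma)$ with $\mathcal R:\mathcal S\times\mathcal A\times\mathcal S\to\mathbb R$, $f:\mathbb R\to\mathbb R$, $\gamma\in[0,1)$; $J(\pi)=f\big(\mathbb E^\pi_\xi[\sum_{t=0}^\infty\gamma^t\mathcal R(s_t,a_t,s_{t+1})]\big)$. *)

theory Defs
  imports "HOL-Probability.Probability_Mass_Function"
begin

(* An environment over finite state type 's and finite action type 'a:
   transition T :: 's => 'a => 's pmf, initial distribution I :: 's pmf. *)

type_synonym ('s,'a) policy = "'s \<Rightarrow> 'a pmf"

primrec state_dist ::
  "('s \<Rightarrow> 'a \<Rightarrow> 's pmf) \<Rightarrow> 's pmf \<Rightarrow> ('s,'a) policy \<Rightarrow> nat \<Rightarrow> 's pmf" where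
  "state_dist T I \<pi> 0 = I"
| "state_dist T I \<pi> (Suc t) =
     bind_pmf (state_dist T I \<pi> t) (\<lambda>s. bind_pmf (\<pi> s) (\<lambda>a. T s a))"

definition step_reward ::
  "('s \<Rightarrow> 'a \<Rightarrow> 's pmf) \<Rightarrow> ('s,'a) policy \<Rightarrow> ('s \<Rightarrow> 'a \<Rightarrow> 's \<Rightarrow> real) \<Rightarrow> 's \<Rightarrow> real" where
  "step_reward T \<pi> R s =
     measure_pmf.expectation (\<pi> s)
       (\<lambda>a. measure_pmf.expectation (T s a) (\<lambda>s'. R s a s'))"

definition RRL_J ::
  "('s \<Rightarrow> 'a \<Rightarrow> 's pmf) \<Rightarrow> 's pmf \<Rightarrow> ('s \<Rightarrow> 'a \<Rightarrow> 's \<Rightarrow> real) \<Rightarrow> real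
    \<Rightarrow> ('a pmf \<Rightarrow> real) \<Rightarrow> real \<Rightarrow> ('s,'a) policy \<Rightarrow> real" where
  "RRL_J T I R \<alpha> F \<gamma> \<pi> =
     (\<Sum>t. \<gamma> ^ t * measure_pmf.expectation (state_dist T I \<pi> t)
              (\<lambda>s. step_reward T \<pi> R s - \<alpha> * F (\<pi> s)))"

definition disc_return ::
  "('s \<Rightarrow> 'a \<Rightarrow> 's pmf) \<Rightarrow> 's pmf \<Rightarrow> ('s \<Rightarrow> 'a \<Rightarrow> 's \<Rightarrow> real) \<Rightarrow> real
    \<Rightarrow> ('s,'a) policy \<Rightarrow> real" where
  "disc_return T I R \<gamma> \<pi> =
     (\<Sum>t. \<gamma> ^ t * measure_pmf.expectation (state_dist T I \<pi> t) (\<lambda>s. step_reward T \<pi> R s))"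

definition ONMR_J ::
  "('s \<Rightarrow> 'a \<Rightarrow> 's pmf) \<Rightarrow> 's pmf \<Rightarrow> ('s \<Rightarrow> 'a \<Rightarrow> 's \<Rightarrow> real) \<Rightarrow> (real \<Rightarrow> real)
    \<Rightarrow> real \<Rightarrow> ('s,'a) policy \<Rightarrow> real" where
  "ONMR_J T I R f \<gamma> \<pi> = f (disc_return T I R \<gamma> \<pi>)"

definition induced_order :: "(('s,'a) policy \<Rightarrow> real) \<Rightarrow> ('s,'a) policy \<Rightarrow> ('s,'a) policy \<Rightarrow> bool" where
  "induced_order J = (\<lambda>\<pi>1 \<pi>2. J \<pi>1 \<ge> J \<pi>2)"

definition Ord_RRL ::
  "('s \<Rightarrow> 'a \<Rightarrow> 's pmf) \<Rightarrow> 's pmf \<Rightarrow> (('s,'a) policy \<Rightarrow> ('s,'a) policy \<Rightarrow> bool) set" where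
  "Ord_RRL T I = {ord. \<exists>R \<alpha> F \<gamma>. 0 \<le> \<gamma> \<and> \<gamma> < 1 \<and>
                          ord = induced_order (RRL_J T I R \<alpha> F \<gamma>)}"

definition Ord_ONMR ::
  "('s \<Rightarrow> 'a \<Rightarrow> 's pmf) \<Rightarrow> 's pmf \<Rightarrow> (('s,'a) policy \<Rightarrow> ('s,'a) policy \<Rightarrow> bool) set" where
  "Ord_ONMR T I = {ord. \<exists>R f \<gamma>. 0 \<le> \<gamma> \<and> \<gamma> < 1 \<and>
                          ord = induced_order (ONMR_J T I R f \<gamma>)}"

definition total_preorder_rel :: "('p \<Rightarrow> 'p \<Rightarrow> bool) \<Rightarrow> bool" where
  "total_preorder_rel r \<longleftrightarrow> (\<forall>x. r x x) \<and> (\<forall>x y z. r x y \<longrightarrow> r y z \<longrightarrow> r x z)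
                           \<and> (\<forall>x y. r x y \<or> r y x)"

end

theory Submission
  imports Defs
begin

definition Pp :: "real \<Rightarrow> real \<Rightarrow> (bool, bool) policy" where
  "Pp u v = (\<lambda>s. bernoulli_pmf (if s then u else v))"

lemma sd_half:
  "state_dist (\<lambda>s a. bernoulli_pmf (1/2)) (bernoulli_pmf (1/2)) \<pi> t = bernoulli_pmf (1/2)"
  by (induction t) simp_all

lemma disc_Pp:
  assumes "0 \<le> u" "u \<le> 1" "0 \<le> v" "v \<le> 1"
  shows "disc_return (\<lambda>s a. bernoulli_pmf (1/2)) (bernoulli_pmf (1/2)) R \<gamma> (Pp u v)
     = (\<Sum>t. \<gamma> ^ t * (
          ((R True True True + R True True False) / 2 * u
          + (R True False True + R True False False) / 2 * (1 - u)) / 2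
        + ((R False True True + R False True False) / 2 * v
          + (R False False True + R False False False) / 2 * (1 - v)) / 2))"
  unfolding disc_return_def sd_half step_reward_def Pp_def
  apply (rule arg_cong[where f=suminf])
  apply (rule ext)
  using assms by (simp add: field_simps)

lemma rrl_Pp:
  assumes "0 \<le> u" "u \<le> 1" "0 \<le> v" "v \<le> 1"
  shows "RRL_J (\<lambda>s a. bernoulli_pmf (1/2)) (bernoulli_pmf (1/2)) (\<lambda>_ _ _. 0) (-1)
           (\<lambda>d. (pmf d True)^2) 0 (Pp u v) = (u^2 + v^2) / 2"
proof -
  have eq: "(\<Sum>t. (0::real) ^ t * X t) = X 0" for X
    by (subst suminf_finite[of "{0}"]) auto
  show ?thesis
    unfolding RRL_J_def sd_half step_reward_def Pp_def eq
    using assms by (simp add: algebra_simps)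
qed

theorem mainTheorem18:
  shows "\<exists>(T :: bool \<Rightarrow> bool \<Rightarrow> bool pmf) (I :: bool pmf)
           (ord :: (bool, bool) policy \<Rightarrow> (bool, bool) policy \<Rightarrow> bool).
           total_preorder_rel ord \<and> ord \<in> Ord_RRL T I \<and> ord \<notin> Ord_ONMR T I"
proof -
  define T :: "bool \<Rightarrow> bool \<Rightarrow> bool pmf" where "T = (\<lambda>s a. bernoulli_pmf (1/2))"
  define I :: "bool pmf" where "I = bernoulli_pmf (1/2)"
  define J where "J = RRL_J T I (\<lambda>_ _ _. 0) (-1) (\<lambda>d. (pmf d True)^2) 0"
  define ord where "ord = induced_order J"
  have tp: "total_preorder_rel ord"
    unfolding total_preorder_rel_def ord_def induced_order_def by auto
  have inR: "ord \<in> Ord_RRL T I"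
    unfolding Ord_RRL_def ord_def J_def by (intro CollectI exI[of _ "\<lambda>_ _ _. 0"] exI[of _ "-1"] exI[of _ "\<lambda>d. (pmf d True)^2"] exI[of _ 0]) simp
  have J_Pp: "J (Pp u v) = (u^2 + v^2) / 2" if "0 \<le> u" "u \<le> 1" "0 \<le> v" "v \<le> 1" for u v
    unfolding J_def T_def I_def using rrl_Pp[OF that] by simp
  have notO: "ord \<notin> Ord_ONMR T I"
  proof
    assume "ord \<in> Ord_ONMR T I"
    then obtain R f \<gamma> where o: "ord = induced_order (ONMR_J T I R f \<gamma>)"
      unfolding Ord_ONMR_def by auto
    define A where "A = (R True True True + R True True False - R True False True - R True False False) / 4"
    define B where "B = (R False True True + R False True False - R False False True - R False False False) / 4"
    have key: "J (Pp u1 v1) = J (Pp u2 v2)"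
      if "0 \<le> u1" "u1 \<le> 1" "0 \<le> v1" "v1 \<le> 1" "0 \<le> u2" "u2 \<le> 1" "0 \<le> v2" "v2 \<le> 1"
         "A * u1 + B * v1 = A * u2 + B * v2" for u1 v1 u2 v2
    proof -
      have "disc_return T I R \<gamma> (Pp u1 v1) = disc_return T I R \<gamma> (Pp u2 v2)"
        unfolding T_def I_def disc_Pp[OF that(1-4)] disc_Pp[OF that(5-8)]
        using that(9) unfolding A_def B_def
        apply (intro arg_cong[where f=suminf] ext arg_cong[where f="\<lambda>x. _ * x"])
        by (simp add: field_simps)
      then have "ord (Pp u1 v1) (Pp u2 v2) \<and> ord (Pp u2 v2) (Pp u1 v1)"
        unfolding o induced_order_def ONMR_J_def by simp
      then show ?thesis unfolding ord_def induced_order_def by simp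
    qed
    show False
    proof (cases "A = B")
      case True
      have "J (Pp 1 0) = J (Pp (1/2) (1/2))"
        by (rule key) (use True in auto)
      then show False using J_Pp[of 1 0] J_Pp[of "1/2" "1/2"] by (simp add: power2_eq_square)
    next
      case False
      define m where "m = 2 * max \<bar>A\<bar> \<bar>B\<bar>"
      have m: "m > 0" using False unfolding m_def by auto
      define u where "u = B / m"
      define v where "v = - A / m"
      have u: "\<bar>u\<bar> \<le> 1/2" unfolding u_def using m by (simp add: m_def abs_divide field_simps)
      have v: "\<bar>v\<bar> \<le> 1/2" unfolding v_def using m by (simp add: m_def abs_divide field_simps)
      have lin: "A * u + B * v = 0" unfolding u_def v_def using m by (simp add: field_simps)
      have "J (Pp (1/2 + u) (1/2 + v)) = J (Pp (1/2 - u) (1/2 - v))"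
        by (rule key) (use u v lin in \<open>auto simp: algebra_simps abs_le_iff\<close>)
      then have "((1/2 + u)^2 + (1/2+v)^2) / 2 = ((1/2 - u)^2 + (1/2-v)^2) / 2"
        using J_Pp[of "1/2+u" "1/2+v"] J_Pp[of "1/2-u" "1/2-v"] u v by (simp add: abs_le_iff)
      then have "u + v = 0" by (simp add: power2_sum power2_diff)
      then have "B - A = 0" unfolding u_def v_def using m by (simp add: field_simps)
      then show False using False by simp
    qed
  qed
  show ?thesis using tp inR notO by blast
qed

end
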